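(* Let $L$ be one of the logics $\mathbf{K4}_h$, $\mathbf{KD4}_h$, $\mathbf{S4}_h$, and let $G(L)$ be the corresponding sequent calculus $G(\mathbf{K4}_h)$, $G(\mathbf{KD4}_h)$, $G(\mathbf{S4}_h)$ described in the context. Then $G(L)$ is equivalent to $L$: for all finite multisets $\Gamma,\Delta$ of formulas of $\mathcal{L}_\infty$, the sequent $\Gamma\Rightarrow\Delta$ is provable in $G(L)$ if and only if $L\vdash \bigwedge\Gamma\rightarrow\bigvee\Delta$ (empty conjunction $=\top$, empty disjunction $=\bot$); in particular $L\vdash A$ iff $G(L)\vdash\ \Rightarrow A$.
   Context: The language $\mathcal{L}_\infty$ consists of modal formulas built from propositional atoms, $\bot,\top$, the connectives $\neg,\wedge,\vee,\rightarrow$ and infinitely many unary modalities $\Box_n$ ($n\in\mathbb{N}$), with the restriction that $\Box_n A$ is a formula only if $n$ is strictly greater than the index of every box occurring in $A$. All formulas below are assumed to be in $\mathcal{L}_\infty$ (so axiom instances and rule applications are only those producing $\mathcal{L}_\infty$-formulas). Hilbert systems: consider the axiom schemes (for all $n\ge 0$) $\mathbf{H}$: $\Box_n A\rightarrow\Box_{n+1}A$; $\mathbf{K}_h$: $\Box_n(A\rightarrow B)\rightarrow(\Box_nA\rightarrow\Box_nB)$; $\mathbf{4}_h$: $\Box_nA\rightarrow\Box_{n+1}\Box_nA$; $\mathbf{D}_h$: $\neg\Box_n\bot$; $\mathbf{T}_h$: $\Box_nA\rightarrow A$. For a set $X$ of schemes, $L(X)$ is the least set of $\mathcal{L}_\infty$-formulas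 containing all classical propositional tautologies (over $\mathcal{L}_\infty$-formulas) and all instances of the schemes in $X$, and closed under modus ponens and the rule: from $A$ infer $\Box_nA$ for any $n$ greater than all box indices in $A$. $\mathbf{K4}_h=L(\mathbf{H},\mathbf{K}_h,\mathbf{4}_h)$, $\mathbf{KD4}_h=L(\mathbf{H},\mathbf{K}_h,\mathbf{4}_h,\mathbf{D}_h)$, $\mathbf{S4}_h=L(\mathbf{H},\mathbf{K}_h,\mathbf{4}_h,\mathbf{T}_h)$. Sequent calculi: sequents $\Gamma\Rightarrow\Delta$ with finite multisets. All three systems contain the axioms $A\Rightarrow A$ and $\bot\Rightarrow$, the structural rules of left/right weakening, left/right contraction and cut (from $\Gamma_0\Rightarrow\Delta_0,A$ and $\Gamma_1,A\Rightarrow\Delta_1$ infer $\Gamma_0,\Gamma_1\Rightarrow\Delta_0,\Delta_1$), and the usual classical (LK-style) left and right rules for $\wedge,\vee,\rightarrow,\neg$. Modal rules (in each, the side condition is $n_i<n$ for all $i\in I$): $\Box_{4_h}R$: from $\{\sigma_r\}_{r\in R},\{\gamma_i,\Box_{n_i}\gamma_i\}_{i\in I}\Rightarrow A$ infer $\{\Box_n\sigma_r\}_{r\in R},\{\Box_{n_i}\gamma_i\}_{i\in I}\Rightarrow\Box_nA$; $\Box_{D_h}R$: from $\{\sigma_r\}_{r\in R},\{\gamma_i,\Box_{n_i}\gamma_i\}_{i\in I}\Rightarrow$ infer $\{\Box_n\sigma_r\}_{r\in R},\{\Box_{n_i}\gamma_i\}_{i\in I}\Rightarrow$; $\Box_{S_h}R$: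 from $\{\sigma_r\}_{r\in R},\{\Box_{n_i}\gamma_i\}_{i\in I}\Rightarrow A$ infer $\{\Box_n\sigma_r\}_{r\in R},\{\Box_{n_i}\gamma_i\}_{i\in I}\Rightarrow\Box_nA$; $\Box_hL$: from $\Gamma,A\Rightarrow\Delta$ infer $\Gamma,\Box_nA\Rightarrow\Delta$. $G(\mathbf{K4}_h)$ = axioms + structural + propositional rules + $\Box_{4_h}R$; $G(\mathbf{KD4}_h)$ = $G(\mathbf{K4}_h)$ + $\Box_{D_h}R$; $G(\mathbf{S4}_h)$ = axioms + structural + propositional rules + $\Box_{S_h}R$ + $\Box_hL$. *)

theory Defs
  imports Main "HOL-Library.Multiset"
begin

datatype fm = Atom nat | Bot | Top | Neg fm | Conj fm fm | Disj fm fm | Imp fm fm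
  | Box nat fm

fun boxes :: "fm \<Rightarrow> nat set" where
  "boxes (Atom p) = {}"
| "boxes Bot = {}"
| "boxes Top = {}"
| "boxes (Neg A) = boxes A"
| "boxes (Conj A B) = boxes A \<union> boxes B"
| "boxes (Disj A B) = boxes A \<union> boxes B"
| "boxes (Imp A B) = boxes A \<union> boxes B"
| "boxes (Box n A) = insert n (boxes A)"

fun wff :: "fm \<Rightarrow> bool" where
  "wff (Atom p) = True"
| "wff Bot = True"
| "wff Top = True"
| "wff (Neg A) = wff A"
| "wff (Conj A B) = (wff A \<and> wff B)"
| "wff (Disj A B) = (wff A \<and> wff B)"
| "wff (Imp A B) = (wff A \<and> wff B)"
| "wff (Box n A) = (wff A \<and> (\<forall>m\<in>boxes A. m < n))"

text \<open>Atoms and boxed formulas are treated as propositional variables.\<close>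
fun peval :: "(fm \<Rightarrow> bool) \<Rightarrow> fm \<Rightarrow> bool" where
  "peval v (Atom p) = v (Atom p)"
| "peval v Bot = False"
| "peval v Top = True"
| "peval v (Neg A) = (\<not> peval v A)"
| "peval v (Conj A B) = (peval v A \<and> peval v B)"
| "peval v (Disj A B) = (peval v A \<or> peval v B)"
| "peval v (Imp A B) = (peval v A \<longrightarrow> peval v B)"
| "peval v (Box n A) = v (Box n A)"

definition taut :: "fm \<Rightarrow> bool" where
  "taut A \<longleftrightarrow> (\<forall>v. peval v A)"

datatype logic = K4h | KD4h | S4h

definition ax_H :: "fm \<Rightarrow> bool" where
  "ax_H F \<longleftrightarrow> (\<exists>n A. F = Imp (Box n A) (Box (Suc n) A))"
definition ax_K :: "fm \<Rightarrow> bool" where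
  "ax_K F \<longleftrightarrow> (\<exists>n A B. F = Imp (Box n (Imp A B)) (Imp (Box n A) (Box n B)))"
definition ax_4 :: "fm \<Rightarrow> bool" where
  "ax_4 F \<longleftrightarrow> (\<exists>n A. F = Imp (Box n A) (Box (Suc n) (Box n A)))"
definition ax_D :: "fm \<Rightarrow> bool" where
  "ax_D F \<longleftrightarrow> (\<exists>n. F = Neg (Box n Bot))"
definition ax_T :: "fm \<Rightarrow> bool" where
  "ax_T F \<longleftrightarrow> (\<exists>n A. F = Imp (Box n A) A)"

fun axiom :: "logic \<Rightarrow> fm \<Rightarrow> bool" where
  "axiom K4h F = (ax_H F \<or> ax_K F \<or> ax_4 F)"
| "axiom KD4h F = (ax_H F \<or> ax_K F \<or> ax_4 F \<or> ax_D F)"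
| "axiom S4h F = (ax_H F \<or> ax_K F \<or> ax_4 F \<or> ax_T F)"

text \<open>Hilbert-style derivability in L(X); only L_infinity formulas are produced.\<close>
inductive hil :: "logic \<Rightarrow> fm \<Rightarrow> bool" for L where
  taut: "wff A \<Longrightarrow> taut A \<Longrightarrow> hil L A"
| ax: "wff A \<Longrightarrow> axiom L A \<Longrightarrow> hil L A"
| mp: "hil L (Imp A B) \<Longrightarrow> hil L A \<Longrightarrow> hil L B"
| nec: "hil L A \<Longrightarrow> (\<forall>m\<in>boxes A. m < n) \<Longrightarrow> hil L (Box n A)"

type_synonym sequent = "fm multiset \<times> fm multiset"

definition wf_seq :: "sequent \<Rightarrow> bool" where
  "wf_seq S \<longleftrightarrow> (\<forall>A\<in>#fst S + snd S. wff A)"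

definition boxp :: "nat \<times> fm \<Rightarrow> fm" where
  "boxp p = Box (fst p) (snd p)"

text \<open>Every rule carries the side condition that its conclusion consists of
  L_infinity formulas.\<close>
inductive gprov :: "logic \<Rightarrow> sequent \<Rightarrow> bool" for L where
  id: "wff A \<Longrightarrow> gprov L ({#A#}, {#A#})"
| botL: "gprov L ({#Bot#}, {#})"
| topR: "gprov L ({#}, {#Top#})"
| weakL: "gprov L (G, D) \<Longrightarrow> wff A \<Longrightarrow> gprov L (add_mset A G, D)"
| weakR: "gprov L (G, D) \<Longrightarrow> wff A \<Longrightarrow> gprov L (G, add_mset A D)"
| contrL: "gprov L (add_mset A (add_mset A G), D) \<Longrightarrow> gprov L (add_mset A G, D)"
| contrR: "gprov L (G, add_mset A (add_mset A D)) \<Longrightarrow> gprov L (G, add_mset A D)"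
| cut: "gprov L (G0, add_mset A D0) \<Longrightarrow> gprov L (add_mset A G1, D1)
        \<Longrightarrow> gprov L (G0 + G1, D0 + D1)"
| conjL: "gprov L (add_mset A (add_mset B G), D) \<Longrightarrow> gprov L (add_mset (Conj A B) G, D)"
| conjR: "gprov L (G, add_mset A D) \<Longrightarrow> gprov L (G, add_mset B D)
        \<Longrightarrow> gprov L (G, add_mset (Conj A B) D)"
| disjL: "gprov L (add_mset A G, D) \<Longrightarrow> gprov L (add_mset B G, D)
        \<Longrightarrow> gprov L (add_mset (Disj A B) G, D)"
| disjR: "gprov L (G, add_mset A (add_mset B D)) \<Longrightarrow> gprov L (G, add_mset (Disj A B) D)"
| impL: "gprov L (G, add_mset A D) \<Longrightarrow> gprov L (add_mset B G, D)
        \<Longrightarrow> gprov L (add_mset (Imp A B) G, D)"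
| impR: "gprov L (add_mset A G, add_mset B D) \<Longrightarrow> gprov L (G, add_mset (Imp A B) D)"
| negL: "gprov L (G, add_mset A D) \<Longrightarrow> gprov L (add_mset (Neg A) G, D)"
| negR: "gprov L (add_mset A G, D) \<Longrightarrow> gprov L (G, add_mset (Neg A) D)"
| box4R: "L \<in> {K4h, KD4h} \<Longrightarrow> (\<forall>p\<in>#Gm. fst p < n)
        \<Longrightarrow> gprov L (S + image_mset snd Gm + image_mset boxp Gm, {#A#})
        \<Longrightarrow> wf_seq (image_mset (Box n) S + image_mset boxp Gm, {#Box n A#})
        \<Longrightarrow> gprov L (image_mset (Box n) S + image_mset boxp Gm, {#Box n A#})"
| boxDR: "L = KD4h \<Longrightarrow> (\<forall>p\<in>#Gm. fst p < n)
        \<Longrightarrow> gprov L (S + image_mset snd Gm + image_mset boxp Gm, {#})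
        \<Longrightarrow> wf_seq (image_mset (Box n) S + image_mset boxp Gm, {#})
        \<Longrightarrow> gprov L (image_mset (Box n) S + image_mset boxp Gm, {#})"
| boxSR: "L = S4h \<Longrightarrow> (\<forall>p\<in>#Gm. fst p < n)
        \<Longrightarrow> gprov L (S + image_mset boxp Gm, {#A#})
        \<Longrightarrow> wf_seq (image_mset (Box n) S + image_mset boxp Gm, {#Box n A#})
        \<Longrightarrow> gprov L (image_mset (Box n) S + image_mset boxp Gm, {#Box n A#})"
| boxL: "L = S4h \<Longrightarrow> gprov L (add_mset A G, D) \<Longrightarrow> wff (Box n A)
        \<Longrightarrow> gprov L (add_mset (Box n A) G, D)"

fun conjs :: "fm list \<Rightarrow> fm" where
  "conjs [] = Top"
| "conjs [A] = A"
| "conjs (A # As) = Conj A (conjs As)"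

fun disjs :: "fm list \<Rightarrow> fm" where
  "disjs [] = Bot"
| "disjs [A] = A"
| "disjs (A # As) = Disj A (disjs As)"

end

theory Submission
  imports Defs
begin

lemma peval_conjs: "peval v (conjs xs) = (\<forall>x\<in>set xs. peval v x)"
  by (induction xs rule: conjs.induct) auto
lemma peval_disjs: "peval v (disjs xs) = (\<exists>x\<in>set xs. peval v x)"
  by (induction xs rule: disjs.induct) auto
lemma wff_conjs: "wff (conjs xs) = (\<forall>x\<in>set xs. wff x)"
  by (induction xs rule: conjs.induct) auto
lemma wff_disjs: "wff (disjs xs) = (\<forall>x\<in>set xs. wff x)"
  by (induction xs rule: disjs.induct) auto
lemma boxes_conjs: "boxes (conjs xs) = (\<Union>x\<in>set xs. boxes x)"
  by (induction xs rule: conjs.induct) auto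

lemma hil_wff: "hil L A \<Longrightarrow> wff A"
  by (induction rule: hil.induct) auto

lemma hil_tc: "(\<forall>P\<in>set Ps. hil L P) \<Longrightarrow> wff C \<Longrightarrow> (\<forall>v. (\<forall>P\<in>set Ps. peval v P) \<longrightarrow> peval v C) \<Longrightarrow> hil L C"
proof (induction Ps arbitrary: C)
  case Nil
  then show ?case by (auto intro: hil.taut simp: taut_def)
next
  case (Cons P Ps)
  have "hil L (Imp P C)"
    using Cons by (auto intro!: Cons.IH dest: hil_wff)
  then show ?case using Cons.prems(1) by (auto intro: hil.mp)
qed

lemma axiom_H: "ax_H F \<Longrightarrow> axiom L F" by (cases L) auto
lemma axiom_K: "ax_K F \<Longrightarrow> axiom L F" by (cases L) auto
lemma axiom_4: "ax_4 F \<Longrightarrow> axiom L F" by (cases L) auto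

lemma hil_H: "m \<le> k \<Longrightarrow> wff (Box m B) \<Longrightarrow> hil L (Imp (Box m B) (Box k B))"
proof (induction k rule: dec_induct)
  case base
  then show ?case by (intro hil_tc[of "[]"]) auto
next
  case (step k)
  have "hil L (Imp (Box k B) (Box (Suc k) B))"
    using step by (intro hil.ax axiom_H) (auto simp: ax_H_def)
  then show ?case using step by (intro hil_tc[of "[Imp (Box m B) (Box k B), Imp (Box k B) (Box (Suc k) B)]"]) auto
qed

lemma hil_4: "m < k \<Longrightarrow> wff (Box m B) \<Longrightarrow> hil L (Imp (Box m B) (Box k (Box m B)))"
proof -
  assume a: "m < k" "wff (Box m B)"
  have 1: "hil L (Imp (Box m B) (Box (Suc m) (Box m B)))"
    using a by (intro hil.ax axiom_4) (auto simp: ax_4_def)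
  have 2: "hil L (Imp (Box (Suc m) (Box m B)) (Box k (Box m B)))"
    using a by (intro hil_H) auto
  show ?thesis using 1 2 a by (intro hil_tc[of "[Imp (Box m B) (Box (Suc m) (Box m B)), Imp (Box (Suc m) (Box m B)) (Box k (Box m B))]"]) auto
qed

lemma hil_box_mono: "hil L (Imp (conjs xs) B) \<Longrightarrow> \<forall>x\<in>set xs. \<forall>m\<in>boxes x. m < n \<Longrightarrow> \<forall>m\<in>boxes B. m < n
  \<Longrightarrow> hil L (Imp (conjs (map (Box n) xs)) (Box n B))"
proof (induction xs arbitrary: B)
  case Nil
  then have wB: "wff B" by (auto dest: hil_wff)
  have "hil L B" using Nil wB by (intro hil_tc[of "[Imp (conjs []) B]"]) auto
  then have "hil L (Box n B)" using Nil by (intro hil.nec) auto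
  then show ?case using Nil wB by (intro hil_tc[of "[Box n B]"]) auto
next
  case (Cons x xs)
  have w: "wff x" "\<forall>y\<in>set xs. wff y" "wff B" using hil_wff[OF Cons.prems(1)] by (auto simp: wff_conjs)
  have "hil L (Imp (conjs xs) (Imp x B))"
    using Cons.prems w by (intro hil_tc[of "[Imp (conjs (x#xs)) B]"]) (auto simp: peval_conjs wff_conjs)
  then have 1: "hil L (Imp (conjs (map (Box n) xs)) (Box n (Imp x B)))"
    using Cons by (intro Cons.IH) auto
  have 2: "hil L (Imp (Box n (Imp x B)) (Imp (Box n x) (Box n B)))"
    using Cons w by (intro hil.ax axiom_K) (auto simp: ax_K_def)
  show ?case using 1 2 Cons w
    by (intro hil_tc[of "[Imp (conjs (map (Box n) xs)) (Box n (Imp x B)), Imp (Box n (Imp x B)) (Imp (Box n x) (Box n B))]"])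
      (auto simp: peval_conjs wff_conjs)
qed


lemma gprov_wf: "gprov L S \<Longrightarrow> wf_seq S"
  by (induction rule: gprov.induct) (auto simp: wf_seq_def)

lemma wfc_box: "\<forall>x\<in>#image_mset (Box n) S + image_mset boxp Gm. wff x \<Longrightarrow> p \<in># Gm
   \<Longrightarrow> wff (snd p) \<and> (\<forall>m\<in>boxes (snd p). m < fst p)"
proof -
  assume w: "\<forall>x\<in>#image_mset (Box n) S + image_mset boxp Gm. wff x" and p: "p \<in># Gm"
  have "boxp p \<in># image_mset (Box n) S + image_mset boxp Gm" using p by simp
  then have "wff (boxp p)" using w by blast
  then show ?thesis by (simp add: boxp_def)
qed

lemma wfc_S: "\<forall>x\<in>#image_mset (Box n) S + image_mset boxp Gm. wff x \<Longrightarrow> x \<in># S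
   \<Longrightarrow> wff x \<and> (\<forall>m\<in>boxes x. m < n)"
proof -
  assume w: "\<forall>x\<in>#image_mset (Box n) S + image_mset boxp Gm. wff x" and p: "x \<in># S"
  have "Box n x \<in># image_mset (Box n) S + image_mset boxp Gm" using p by simp
  then have "wff (Box n x)" using w by blast
  then show ?thesis by simp
qed

lemma bnd_lemma: "\<forall>x\<in>#image_mset (Box n) S + image_mset boxp Gm. wff x \<Longrightarrow> \<forall>p\<in>#Gm. fst p < n
  \<Longrightarrow> x \<in># S + image_mset snd Gm + image_mset boxp Gm \<Longrightarrow> m \<in> boxes x \<Longrightarrow> m < n"
proof -
  assume w: "\<forall>x\<in>#image_mset (Box n) S + image_mset boxp Gm. wff x" and f: "\<forall>p\<in>#Gm. fst p < n"
    and x: "x \<in># S + image_mset snd Gm + image_mset boxp Gm" and m: "m \<in> boxes x"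
  from x consider "x \<in># S" | p where "p \<in># Gm" "x = snd p" | p where "p \<in># Gm" "x = boxp p" by auto
  then show "m < n"
  proof cases
    case 1 then show ?thesis using wfc_S[OF w] m by blast
  next
    case 2
    then show ?thesis using wfc_box[OF w 2(1)] m f by fastforce
  next
    case 3
    then show ?thesis using wfc_box[OF w 3(1)] m f by (fastforce simp: boxp_def)
  qed
qed

lemma gprov_sound: "gprov L S \<Longrightarrow> set gs = set_mset (fst S) \<Longrightarrow> set ds = set_mset (snd S)
   \<Longrightarrow> hil L (Imp (conjs gs) (disjs ds))"
proof (induction arbitrary: gs ds rule: gprov.induct)
  case (id A)
  then show ?case by (intro hil_tc[of "[]"]) (auto simp: peval_conjs peval_disjs wff_conjs wff_disjs)
next
  case botL
  then show ?case by (intro hil_tc[of "[]"]) (auto simp: peval_conjs peval_disjs wff_conjs wff_disjs)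
next
  case topR
  then show ?case by (intro hil_tc[of "[]"]) (auto simp: peval_conjs peval_disjs wff_conjs wff_disjs)
next
  case (weakL G D A)
  obtain g where g: "mset g = G" using ex_mset by blast
  obtain d where d: "mset d = D" using ex_mset by blast
  have 1: "hil L (Imp (conjs g) (disjs d))" using weakL g d by auto
  have "wf_seq (G, D)" using weakL gprov_wf by auto
  then show ?case using 1 weakL g d
    by (intro hil_tc[of "[Imp (conjs g) (disjs d)]"]) (auto simp: peval_conjs peval_disjs wff_conjs wff_disjs wf_seq_def)
next
  case (weakR G D A)
  obtain g where g: "mset g = G" using ex_mset by blast
  obtain d where d: "mset d = D" using ex_mset by blast
  have 1: "hil L (Imp (conjs g) (disjs d))" using weakR g d by auto
  have "wf_seq (G, D)" using weakR gprov_wf by auto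
  then show ?case using 1 weakR g d
    by (intro hil_tc[of "[Imp (conjs g) (disjs d)]"]) (auto simp: peval_conjs peval_disjs wff_conjs wff_disjs wf_seq_def)
next
  case (contrL A G D)
  then show ?case by auto
next
  case (contrR G A D)
  then show ?case by auto
next
  case (cut G0 A D0 G1 D1)
  obtain g0 where g0: "mset g0 = G0" using ex_mset by blast
  obtain d0 where d0: "mset d0 = D0" using ex_mset by blast
  obtain g1 where g1: "mset g1 = G1" using ex_mset by blast
  obtain d1 where d1: "mset d1 = D1" using ex_mset by blast
  have 1: "hil L (Imp (conjs g0) (disjs (A # d0)))" using cut g0 d0 by auto
  have 2: "hil L (Imp (conjs (A # g1)) (disjs d1))" using cut g1 d1 by auto
  have "wf_seq (G0, add_mset A D0)" "wf_seq (add_mset A G1, D1)" using cut gprov_wf by auto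
  then show ?case using 1 2 cut g0 d0 g1 d1
    by (intro hil_tc[of "[Imp (conjs g0) (disjs (A # d0)), Imp (conjs (A # g1)) (disjs d1)]"])
       (auto simp: peval_conjs peval_disjs wff_conjs wff_disjs wf_seq_def)
next
  case (conjL A B G D)
  obtain g where g: "mset g = G" using ex_mset by blast
  obtain d where d: "mset d = D" using ex_mset by blast
  have 1: "hil L (Imp (conjs (A # B # g)) (disjs d))" using conjL g d by (intro conjL.IH) auto
  have "wf_seq (add_mset A (add_mset B G), D)" using conjL gprov_wf by auto
  then show ?case using 1 conjL g d
    by (intro hil_tc[of "[Imp (conjs (A # B # g)) (disjs d)]"]) (auto simp: peval_conjs peval_disjs wff_conjs wff_disjs wf_seq_def)
next
  case (conjR G A D B)
  obtain g where g: "mset g = G" using ex_mset by blast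
  obtain d where d: "mset d = D" using ex_mset by blast
  have 1: "hil L (Imp (conjs g) (disjs (A # d)))" using conjR g d by auto
  have 2: "hil L (Imp (conjs g) (disjs (B # d)))" using conjR g d by auto
  have "wf_seq (G, add_mset A D)" "wf_seq (G, add_mset B D)" using conjR gprov_wf by auto
  then show ?case using 1 2 conjR g d
    by (intro hil_tc[of "[Imp (conjs g) (disjs (A # d)), Imp (conjs g) (disjs (B # d))]"])
       (auto simp: peval_conjs peval_disjs wff_conjs wff_disjs wf_seq_def)
next
  case (disjL A G D B)
  obtain g where g: "mset g = G" using ex_mset by blast
  obtain d where d: "mset d = D" using ex_mset by blast
  have 1: "hil L (Imp (conjs (A # g)) (disjs d))" using disjL g d by auto
  have 2: "hil L (Imp (conjs (B # g)) (disjs d))" using disjL g d by auto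
  have "wf_seq (add_mset A G, D)" "wf_seq (add_mset B G, D)" using disjL gprov_wf by auto
  then show ?case using 1 2 disjL g d
    by (intro hil_tc[of "[Imp (conjs (A # g)) (disjs d), Imp (conjs (B # g)) (disjs d)]"])
       (auto simp: peval_conjs peval_disjs wff_conjs wff_disjs wf_seq_def)
next
  case (disjR G A B D)
  obtain g where g: "mset g = G" using ex_mset by blast
  obtain d where d: "mset d = D" using ex_mset by blast
  have 1: "hil L (Imp (conjs g) (disjs (A # B # d)))" using disjR g d by (intro disjR.IH) auto
  have "wf_seq (G, add_mset A (add_mset B D))" using disjR gprov_wf by auto
  then show ?case using 1 disjR g d
    by (intro hil_tc[of "[Imp (conjs g) (disjs (A # B # d))]"]) (auto simp: peval_conjs peval_disjs wff_conjs wff_disjs wf_seq_def)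
next
  case (impL G A D B)
  obtain g where g: "mset g = G" using ex_mset by blast
  obtain d where d: "mset d = D" using ex_mset by blast
  have 1: "hil L (Imp (conjs g) (disjs (A # d)))" using impL g d by auto
  have 2: "hil L (Imp (conjs (B # g)) (disjs d))" using impL g d by auto
  have "wf_seq (G, add_mset A D)" "wf_seq (add_mset B G, D)" using impL gprov_wf by auto
  then show ?case using 1 2 impL g d
    by (intro hil_tc[of "[Imp (conjs g) (disjs (A # d)), Imp (conjs (B # g)) (disjs d)]"])
       (auto simp: peval_conjs peval_disjs wff_conjs wff_disjs wf_seq_def)
next
  case (impR A G B D)
  obtain g where g: "mset g = G" using ex_mset by blast
  obtain d where d: "mset d = D" using ex_mset by blast
  have 1: "hil L (Imp (conjs (A # g)) (disjs (B # d)))" using impR g d by auto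
  have "wf_seq (add_mset A G, add_mset B D)" using impR gprov_wf by auto
  then show ?case using 1 impR g d
    by (intro hil_tc[of "[Imp (conjs (A # g)) (disjs (B # d))]"]) (auto simp: peval_conjs peval_disjs wff_conjs wff_disjs wf_seq_def)
next
  case (negL G A D)
  obtain g where g: "mset g = G" using ex_mset by blast
  obtain d where d: "mset d = D" using ex_mset by blast
  have 1: "hil L (Imp (conjs g) (disjs (A # d)))" using negL g d by auto
  have "wf_seq (G, add_mset A D)" using negL gprov_wf by auto
  then show ?case using 1 negL g d
    by (intro hil_tc[of "[Imp (conjs g) (disjs (A # d))]"]) (auto simp: peval_conjs peval_disjs wff_conjs wff_disjs wf_seq_def)
next
  case (negR A G D)
  obtain g where g: "mset g = G" using ex_mset by blast
  obtain d where d: "mset d = D" using ex_mset by blast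
  have 1: "hil L (Imp (conjs (A # g)) (disjs d))" using negR g d by auto
  have "wf_seq (add_mset A G, D)" using negR gprov_wf by auto
  then show ?case using 1 negR g d
    by (intro hil_tc[of "[Imp (conjs (A # g)) (disjs d)]"]) (auto simp: peval_conjs peval_disjs wff_conjs wff_disjs wf_seq_def)
next
  case (box4R Gm n S A)
  obtain sl where sl: "mset sl = S" using ex_mset by blast
  obtain gl where gl: "mset gl = Gm" using ex_mset by blast
  define xs where "xs = sl @ map snd gl @ map boxp gl"
  have 1: "hil L (Imp (conjs xs) (disjs [A]))" using box4R sl gl by (intro box4R.IH) (auto simp: xs_def)
  have wfc: "\<forall>x\<in>set_mset (image_mset (Box n) S + image_mset boxp Gm). wff x" "wff (Box n A)"
    using box4R.hyps(4) by (auto simp: wf_seq_def)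
  have bnd: "\<forall>x\<in>set xs. \<forall>m\<in>boxes x. m < n"
    using sl gl by (auto simp: xs_def intro!: bnd_lemma[OF wfc(1) box4R.hyps(2)]) force+
  have 2: "hil L (Imp (conjs (map (Box n) xs)) (Box n A))"
    using 1 bnd wfc by (intro hil_box_mono) auto
  have 3: "\<forall>p\<in>set gl. hil L (Imp (boxp p) (Box n (snd p)))"
    using wfc_box[OF wfc(1)] box4R.hyps(2) gl by (force simp: boxp_def intro!: hil_H)
  have 4: "\<forall>p\<in>set gl. hil L (Imp (boxp p) (Box n (boxp p)))"
    using wfc_box[OF wfc(1)] box4R.hyps(2) gl unfolding boxp_def by (force intro!: hil_4)
  show ?case
  proof (rule hil_tc[of "Imp (conjs (map (Box n) xs)) (Box n A) # map (\<lambda>p. Imp (boxp p) (Box n (snd p))) gl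
        @ map (\<lambda>p. Imp (boxp p) (Box n (boxp p))) gl"])
    show "\<forall>P\<in>set (Imp (conjs (map (Box n) xs)) (Box n A) # map (\<lambda>p. Imp (boxp p) (Box n (snd p))) gl
        @ map (\<lambda>p. Imp (boxp p) (Box n (boxp p))) gl). hil L P" using 2 3 4 by auto
    show "wff (Imp (conjs gs) (disjs ds))" using wfc box4R.prems sl gl by (auto simp: wff_conjs wff_disjs)
    show "\<forall>v. (\<forall>P\<in>set (Imp (conjs (map (Box n) xs)) (Box n A) # map (\<lambda>p. Imp (boxp p) (Box n (snd p))) gl
        @ map (\<lambda>p. Imp (boxp p) (Box n (boxp p))) gl). peval v P) \<longrightarrow> peval v (Imp (conjs gs) (disjs ds))"
    proof (intro allI impI)
      fix v assume P: "\<forall>P\<in>set (Imp (conjs (map (Box n) xs)) (Box n A) # map (\<lambda>p. Imp (boxp p) (Box n (snd p))) gl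
        @ map (\<lambda>p. Imp (boxp p) (Box n (boxp p))) gl). peval v P"
      show "peval v (Imp (conjs gs) (disjs ds))"
      proof (clarsimp simp only: peval.simps peval_conjs peval_disjs)
        assume G: "\<forall>x\<in>set gs. peval v x"
        have a: "\<forall>x\<in>set sl. peval v (Box n x)" using G box4R.prems sl by (auto simp del: peval.simps)
        have b: "\<forall>p\<in>set gl. peval v (boxp p)" using G box4R.prems gl by (auto simp del: peval.simps)
        have c: "\<forall>p\<in>set gl. peval v (Box n (snd p))"
        proof
          fix p assume "p \<in> set gl"
          then have "peval v (Imp (boxp p) (Box n (snd p)))" "peval v (boxp p)" using P b by (auto simp del: peval.simps)
          then show "peval v (Box n (snd p))" by auto
        qed
        have d: "\<forall>p\<in>set gl. peval v (Box n (boxp p))"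
        proof
          fix p assume "p \<in> set gl"
          then have "peval v (Imp (boxp p) (Box n (boxp p)))" "peval v (boxp p)" using P b by (auto simp del: peval.simps)
          then show "peval v (Box n (boxp p))" by auto
        qed
        have "peval v (conjs (map (Box n) xs))" unfolding peval_conjs xs_def using a c d by auto
        then have "peval v (Box n A)" using P by (simp only: peval.simps list.set_intros(1)) auto
        then show "\<exists>x\<in>set ds. peval v x" using box4R.prems by auto
      qed
    qed
  qed
next
  case (boxDR Gm n S)
  obtain sl where sl: "mset sl = S" using ex_mset by blast
  obtain gl where gl: "mset gl = Gm" using ex_mset by blast
  define xs where "xs = sl @ map snd gl @ map boxp gl"
  have 1: "hil L (Imp (conjs xs) (disjs []))" using boxDR sl gl by (intro boxDR.IH) (auto simp: xs_def)
  have wfc: "\<forall>x\<in>set_mset (image_mset (Box n) S + image_mset boxp Gm). wff x"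
    using boxDR.hyps(4) by (auto simp: wf_seq_def)
  have bnd: "\<forall>x\<in>set xs. \<forall>m\<in>boxes x. m < n"
    using sl gl by (auto simp: xs_def intro!: bnd_lemma[OF wfc(1) boxDR.hyps(2)]) force+
  have 2: "hil L (Imp (conjs (map (Box n) xs)) (Box n Bot))"
    using 1 bnd wfc by (intro hil_box_mono) auto
  have 3: "\<forall>p\<in>set gl. hil L (Imp (boxp p) (Box n (snd p)))"
    using wfc_box[OF wfc(1)] boxDR.hyps(2) gl by (force simp: boxp_def intro!: hil_H)
  have 4: "\<forall>p\<in>set gl. hil L (Imp (boxp p) (Box n (boxp p)))"
    using wfc_box[OF wfc(1)] boxDR.hyps(2) gl unfolding boxp_def by (force intro!: hil_4)
  have 5: "hil L (Neg (Box n Bot))" using boxDR.hyps(1) by (intro hil.ax) (auto simp: ax_D_def)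
  show ?case
  proof (rule hil_tc[of "Neg (Box n Bot) # Imp (conjs (map (Box n) xs)) (Box n Bot) # map (\<lambda>p. Imp (boxp p) (Box n (snd p))) gl
        @ map (\<lambda>p. Imp (boxp p) (Box n (boxp p))) gl"])
    show "\<forall>P\<in>set (Neg (Box n Bot) # Imp (conjs (map (Box n) xs)) (Box n Bot) # map (\<lambda>p. Imp (boxp p) (Box n (snd p))) gl
        @ map (\<lambda>p. Imp (boxp p) (Box n (boxp p))) gl). hil L P" using 2 3 4 5 by auto
    show "wff (Imp (conjs gs) (disjs ds))" using wfc boxDR.prems sl gl by (auto simp: wff_conjs wff_disjs)
    show "\<forall>v. (\<forall>P\<in>set (Neg (Box n Bot) # Imp (conjs (map (Box n) xs)) (Box n Bot) # map (\<lambda>p. Imp (boxp p) (Box n (snd p))) gl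
        @ map (\<lambda>p. Imp (boxp p) (Box n (boxp p))) gl). peval v P) \<longrightarrow> peval v (Imp (conjs gs) (disjs ds))"
    proof (intro allI impI)
      fix v assume P: "\<forall>P\<in>set (Neg (Box n Bot) # Imp (conjs (map (Box n) xs)) (Box n Bot) # map (\<lambda>p. Imp (boxp p) (Box n (snd p))) gl
        @ map (\<lambda>p. Imp (boxp p) (Box n (boxp p))) gl). peval v P"
      show "peval v (Imp (conjs gs) (disjs ds))"
      proof (clarsimp simp only: peval.simps peval_conjs peval_disjs)
        assume G: "\<forall>x\<in>set gs. peval v x"
        have a: "\<forall>x\<in>set sl. peval v (Box n x)" using G boxDR.prems sl by (auto simp del: peval.simps)
        have b: "\<forall>p\<in>set gl. peval v (boxp p)" using G boxDR.prems gl by (auto simp del: peval.simps)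
        have c: "\<forall>p\<in>set gl. peval v (Box n (snd p))"
        proof
          fix p assume "p \<in> set gl"
          then have "peval v (Imp (boxp p) (Box n (snd p)))" "peval v (boxp p)" using P b by (auto simp del: peval.simps)
          then show "peval v (Box n (snd p))" by auto
        qed
        have d: "\<forall>p\<in>set gl. peval v (Box n (boxp p))"
        proof
          fix p assume "p \<in> set gl"
          then have "peval v (Imp (boxp p) (Box n (boxp p)))" "peval v (boxp p)" using P b by (auto simp del: peval.simps)
          then show "peval v (Box n (boxp p))" by auto
        qed
        have "peval v (conjs (map (Box n) xs))" unfolding peval_conjs xs_def using a c d by auto
        then have "peval v (Box n Bot)" using P by (simp only: peval.simps list.set_intros(1)) auto
        then show "\<exists>x\<in>set ds. peval v x" using P by auto
      qed
    qed
  qed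
next
  case (boxSR Gm n S A)
  obtain sl where sl: "mset sl = S" using ex_mset by blast
  obtain gl where gl: "mset gl = Gm" using ex_mset by blast
  define xs where "xs = sl @ map boxp gl"
  have 1: "hil L (Imp (conjs xs) (disjs [A]))" using boxSR sl gl by (intro boxSR.IH) (auto simp: xs_def)
  have wfc: "\<forall>x\<in>set_mset (image_mset (Box n) S + image_mset boxp Gm). wff x" "wff (Box n A)"
    using boxSR.hyps(4) by (auto simp: wf_seq_def)
  have bnd: "\<forall>x\<in>set xs. \<forall>m\<in>boxes x. m < n"
    using sl gl by (auto simp: xs_def intro!: bnd_lemma[OF wfc(1) boxSR.hyps(2)])
  have 2: "hil L (Imp (conjs (map (Box n) xs)) (Box n A))"
    using 1 bnd wfc by (intro hil_box_mono) auto
  have 4: "\<forall>p\<in>set gl. hil L (Imp (boxp p) (Box n (boxp p)))"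
    using wfc_box[OF wfc(1)] boxSR.hyps(2) gl unfolding boxp_def by (force intro!: hil_4)
  show ?case
  proof (rule hil_tc[of "Imp (conjs (map (Box n) xs)) (Box n A) # map (\<lambda>p. Imp (boxp p) (Box n (boxp p))) gl"])
    show "\<forall>P\<in>set (Imp (conjs (map (Box n) xs)) (Box n A) # map (\<lambda>p. Imp (boxp p) (Box n (boxp p))) gl). hil L P" using 2 4 by auto
    show "wff (Imp (conjs gs) (disjs ds))" using wfc boxSR.prems sl gl by (auto simp: wff_conjs wff_disjs)
    show "\<forall>v. (\<forall>P\<in>set (Imp (conjs (map (Box n) xs)) (Box n A) # map (\<lambda>p. Imp (boxp p) (Box n (boxp p))) gl). peval v P) \<longrightarrow> peval v (Imp (conjs gs) (disjs ds))"
    proof (intro allI impI)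
      fix v assume P: "\<forall>P\<in>set (Imp (conjs (map (Box n) xs)) (Box n A) # map (\<lambda>p. Imp (boxp p) (Box n (boxp p))) gl). peval v P"
      show "peval v (Imp (conjs gs) (disjs ds))"
      proof (clarsimp simp only: peval.simps peval_conjs peval_disjs)
        assume G: "\<forall>x\<in>set gs. peval v x"
        have a: "\<forall>x\<in>set sl. peval v (Box n x)" using G boxSR.prems sl by (auto simp del: peval.simps)
        have b: "\<forall>p\<in>set gl. peval v (boxp p)" using G boxSR.prems gl by (auto simp del: peval.simps)
        have d: "\<forall>p\<in>set gl. peval v (Box n (boxp p))"
        proof
          fix p assume "p \<in> set gl"
          then have "peval v (Imp (boxp p) (Box n (boxp p)))" "peval v (boxp p)" using P b by (auto simp del: peval.simps)
          then show "peval v (Box n (boxp p))" by auto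
        qed
        have "peval v (conjs (map (Box n) xs))" unfolding peval_conjs xs_def using a d by auto
        then have "peval v (Box n A)" using P by (simp only: peval.simps list.set_intros(1)) auto
        then show "\<exists>x\<in>set ds. peval v x" using boxSR.prems by auto
      qed
    qed
  qed
next
  case (boxL A G D n)
  obtain g where g: "mset g = G" using ex_mset by blast
  obtain d where d: "mset d = D" using ex_mset by blast
  have 1: "hil L (Imp (conjs (A # g)) (disjs d))" using boxL g d by auto
  have 2: "hil L (Imp (Box n A) A)" using boxL by (intro hil.ax) (auto simp: ax_T_def)
  have "wf_seq (add_mset A G, D)" using boxL gprov_wf by auto
  then show ?case using 1 2 boxL g d
    by (intro hil_tc[of "[Imp (conjs (A # g)) (disjs d), Imp (Box n A) A]"]) (auto simp: peval_conjs peval_disjs wff_conjs wff_disjs wf_seq_def)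
qed


lemma weakL_m: "gprov L (G, D) \<Longrightarrow> \<forall>x\<in>#G'. wff x \<Longrightarrow> gprov L (G + G', D)"
  by (induction G' rule: multiset_induct) (auto intro: gprov.weakL)

lemma weakR_m: "gprov L (G, D) \<Longrightarrow> \<forall>x\<in>#D'. wff x \<Longrightarrow> gprov L (G, D + D')"
  by (induction D' rule: multiset_induct) (auto intro: gprov.weakR)

lemma weak_m: "gprov L (G, D) \<Longrightarrow> \<forall>x\<in>#G'+D'. wff x \<Longrightarrow> gprov L (G + G', D + D')"
  using weakL_m weakR_m by (metis union_iff)

fun cs :: "fm \<Rightarrow> nat" where
  "cs (Neg A) = Suc (cs A)"
| "cs (Conj A B) = Suc (cs A + cs B)"
| "cs (Disj A B) = Suc (cs A + cs B)"
| "cs (Imp A B) = Suc (cs A + cs B)"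
| "cs _ = 0"

definition msz :: "fm multiset \<Rightarrow> fm multiset \<Rightarrow> nat" where
  "msz G D = sum_mset (image_mset cs G) + sum_mset (image_mset cs D)"

definition valid :: "fm multiset \<Rightarrow> fm multiset \<Rightarrow> bool" where
  "valid G D \<longleftrightarrow> (\<forall>v. (\<forall>x\<in>#G. peval v x) \<longrightarrow> (\<exists>y\<in>#D. peval v y))"

lemma atomic_case:
  assumes w: "\<forall>x\<in>#G+D. wff x" and val: "valid G D"
    and at: "\<forall>x\<in>#G+D. cs x = 0"
  shows "gprov L (G, D)"
proof (cases "Bot \<in># G")
  case True
  then obtain G' where "G = add_mset Bot G'" by (metis multi_member_split)
  then show ?thesis using weak_m[OF gprov.botL, of G' D] w by auto
next
  case nB: False
  show ?thesis
  proof (cases "Top \<in># D")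
    case True
    then obtain D' where "D = add_mset Top D'" by (metis multi_member_split)
    then show ?thesis using weak_m[OF gprov.topR, of G D'] w by auto
  next
    case nT: False
    define v where "v = (\<lambda>x. x \<in># G)"
    have "\<forall>x\<in>#G. peval v x"
    proof
      fix x assume x: "x \<in># G"
      then have "cs x = 0" using at by auto
      then show "peval v x" using x nB by (cases x) (auto simp: v_def)
    qed
    then obtain y where y: "y \<in># D" "peval v y" using val unfolding valid_def by blast
    then have "cs y = 0" using at by auto
    then have yG: "y \<in># G" using y nT by (cases y) (auto simp: v_def)
    obtain G' where G': "G = add_mset y G'" using yG by (metis multi_member_split)
    obtain D' where D': "D = add_mset y D'" using y by (metis multi_member_split)
    have "gprov L ({#y#} + G', {#y#} + D')"
      using weak_m[OF gprov.id[of y], of G' D'] w G' D' by auto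
    then show ?thesis using G' D' by simp
  qed
qed

lemma prop_complete: "\<forall>x\<in>#G+D. wff x \<Longrightarrow> valid G D \<Longrightarrow> gprov L (G, D)"
proof (induction "msz G D" arbitrary: G D rule: less_induct)
  case less
  show ?case
  proof (cases "\<exists>x\<in>#G. cs x \<noteq> 0")
    case True
    then obtain A G' where G: "G = add_mset A G'" and cA: "cs A \<noteq> 0" by (metis multi_member_split)
    show ?thesis
    proof (cases A)
      case (Neg B)
      have "gprov L (G', add_mset B D)"
        using less G Neg by (intro less.hyps) (auto simp: msz_def valid_def)
      then show ?thesis using G Neg by (auto intro: gprov.negL)
    next
      case (Conj B C)
      have "gprov L (add_mset B (add_mset C G'), D)"
        using less G Conj by (intro less.hyps) (auto simp: msz_def valid_def)
      then show ?thesis using G Conj by (auto intro: gprov.conjL)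
    next
      case (Disj B C)
      have "gprov L (add_mset B G', D)" "gprov L (add_mset C G', D)"
        using less G Disj by (auto intro!: less.hyps simp: msz_def valid_def)
      then show ?thesis using G Disj by (auto intro: gprov.disjL)
    next
      case (Imp B C)
      have "gprov L (G', add_mset B D)" "gprov L (add_mset C G', D)"
        using less G Imp by (auto intro!: less.hyps simp: msz_def valid_def)
      then show ?thesis using G Imp by (auto intro: gprov.impL)
    qed (use cA in auto)
  next
    case nG: False
    show ?thesis
    proof (cases "\<exists>x\<in>#D. cs x \<noteq> 0")
      case True
      then obtain A D' where D: "D = add_mset A D'" and cA: "cs A \<noteq> 0" by (metis multi_member_split)
      show ?thesis
      proof (cases A)
        case (Neg B)
        have "gprov L (add_mset B G, D')"
          using less D Neg by (intro less.hyps) (auto simp: msz_def valid_def)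
        then show ?thesis using D Neg by (auto intro: gprov.negR)
      next
        case (Conj B C)
        have "valid G (add_mset B D')" "valid G (add_mset C D')"
          using less.prems(2) D Conj unfolding valid_def by (simp, meson)+
        then have "gprov L (G, add_mset B D')" "gprov L (G, add_mset C D')"
          using less D Conj by (auto intro!: less.hyps simp: msz_def)
        then show ?thesis using D Conj by (auto intro: gprov.conjR)
      next
        case (Disj B C)
        have "gprov L (G, add_mset B (add_mset C D'))"
          using less D Disj by (intro less.hyps) (auto simp: msz_def valid_def)
        then show ?thesis using D Disj by (auto intro: gprov.disjR)
      next
        case (Imp B C)
        have "gprov L (add_mset B G, add_mset C D')"
          using less D Imp by (intro less.hyps) (auto simp: msz_def valid_def)
        then show ?thesis using D Imp by (auto intro: gprov.impR)
      qed (use cA in auto)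
    next
      case False
      then show ?thesis using nG less.prems by (intro atomic_case) auto
    qed
  qed
qed


lemma sem_cut: "gprov L ({#}, {#X#}) \<Longrightarrow> \<forall>x\<in>#G+D. wff x \<Longrightarrow> valid (add_mset X G) D \<Longrightarrow> gprov L (G, D)"
proof -
  assume g: "gprov L ({#}, {#X#})" and w: "\<forall>x\<in>#G+D. wff x" and v: "valid (add_mset X G) D"
  have "wff X" using gprov_wf[OF g] by (simp add: wf_seq_def)
  then have "gprov L (add_mset X G, D)" using w v by (intro prop_complete) auto
  from gprov.cut[of L "{#}" X "{#}", OF _ this] g show ?thesis by simp
qed

lemma collapseL: "gprov L (G + mset gs, D) \<Longrightarrow> gprov L (add_mset (conjs gs) G, D)"
proof (induction gs arbitrary: G rule: conjs.induct)
  case 1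
  then show ?case by (auto intro: gprov.weakL)
next
  case (2 A)
  then show ?case by simp
next
  case (3 A B As)
  have "gprov L (add_mset (conjs (B # As)) (add_mset A G), D)"
    using 3(2) by (intro 3(1)) (simp add: add_mset_commute)
  then have "gprov L (add_mset A (add_mset (conjs (B # As)) G), D)" by (simp add: add_mset_commute)
  then show ?case by (auto intro: gprov.conjL)
qed

lemma collapseR: "gprov L (G, D + mset ds) \<Longrightarrow> gprov L (G, add_mset (disjs ds) D)"
proof (induction ds arbitrary: D rule: disjs.induct)
  case 1
  then show ?case by (auto intro: gprov.weakR)
next
  case (2 A)
  then show ?case by simp
next
  case (3 A B As)
  have "gprov L (G, add_mset (disjs (B # As)) (add_mset A D))"
    using 3(2) by (intro 3(1)) (simp add: add_mset_commute)
  then have "gprov L (G, add_mset A (add_mset (disjs (B # As)) D))" by (simp add: add_mset_commute)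
  then show ?case by (auto intro: gprov.disjR)
qed

lemma seq_fm: "gprov L (mset gs, mset ds) \<Longrightarrow> gprov L ({#}, {#Imp (conjs gs) (disjs ds)#})"
proof -
  assume "gprov L (mset gs, mset ds)"
  then have "gprov L (add_mset (conjs gs) {#}, mset ds)" using collapseL[of L "{#}" gs] by simp
  then have "gprov L (add_mset (conjs gs) {#}, add_mset (disjs ds) {#})" using collapseR[of L _ "{#}" ds] by simp
  then show ?thesis using gprov.impR by fastforce
qed

lemma boxR_any:
  assumes f: "\<forall>p\<in>#Gm. fst p < n" and p: "gprov L (S + image_mset boxp Gm, {#A#})"
    and w: "wf_seq (image_mset (Box n) S + image_mset boxp Gm, {#Box n A#})"
  shows "gprov L (image_mset (Box n) S + image_mset boxp Gm, {#Box n A#})"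
proof (cases "L = S4h")
  case True
  then show ?thesis using gprov.boxSR[OF True f p w] by simp
next
  case False
  then have L: "L \<in> {K4h, KD4h}" by (cases L) auto
  have w1: "\<forall>x\<in>#image_mset (Box n) S + image_mset boxp Gm. wff x" using w by (simp add: wf_seq_def)
  have "\<forall>x\<in>#image_mset snd Gm. wff x" using wfc_box[OF w1] by auto
  then have "gprov L (S + image_mset boxp Gm + image_mset snd Gm, {#A#})" using weakL_m[OF p] by blast
  then have "gprov L (S + image_mset snd Gm + image_mset boxp Gm, {#A#})" by (simp add: ac_simps)
  then show ?thesis using gprov.box4R[OF L f _ w] by simp
qed


lemma ax_complete: "wff F \<Longrightarrow> axiom L F \<Longrightarrow> gprov L ({#}, {#F#})"
proof -
  assume wF: "wff F" and ax: "axiom L F"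
  have H: "gprov L ({#}, {#F#})" if hh: "ax_H F"
  proof -
    obtain n A where F: "F = Imp (Box n A) (Box (Suc n) A)" using hh by (auto simp: ax_H_def)
    have wA: "wff A" "\<forall>m\<in>boxes A. m < n" using wF F by auto
    have wS: "\<forall>m\<in>boxes A. m < Suc n" using wA by auto
    have "gprov L ({#Box n A#}, {#Box (Suc n) A#})"
    proof (cases "L = S4h")
      case True
      have "gprov L ({#A#}, {#A#})" using wA by (intro gprov.id)
      then have "gprov L ({#Box n A#}, {#A#})" using gprov.boxL[OF True, of A "{#}" "{#A#}" n] wA by simp
      then show ?thesis using gprov.boxSR[OF True, of "{#(n,A)#}" "Suc n" "{#}" A] wA wS
        by (auto simp: boxp_def wf_seq_def)
    next
      case False
      then have L: "L \<in> {K4h, KD4h}" by (cases L) auto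
      have "gprov L ({#} + image_mset snd {#(n,A)#} + image_mset boxp {#(n,A)#}, {#A#})"
        using wA by (intro prop_complete) (auto simp: boxp_def valid_def)
      then show ?thesis using gprov.box4R[OF L, of "{#(n,A)#}" "Suc n" "{#}" A] wA wS
        by (auto simp: boxp_def wf_seq_def)
    qed
    then show ?thesis using F gprov.impR[of L "Box n A" "{#}" "Box (Suc n) A" "{#}"] by simp
  qed
  have K: "gprov L ({#}, {#F#})" if hh: "ax_K F"
  proof -
    obtain n A B where F: "F = Imp (Box n (Imp A B)) (Imp (Box n A) (Box n B))" using hh by (auto simp: ax_K_def)
    have w: "wff (Box n (Imp A B))" "wff (Box n A)" "wff (Box n B)" using wF unfolding F by simp_all
    have wAB: "wff A" "wff B" using w by simp_all
    have v1: "valid ({#Imp A B, A#} + image_mset boxp {#}) {#B#}" by (simp add: valid_def)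
    have "gprov L ({#Imp A B, A#} + image_mset boxp {#}, {#B#})"
      using wAB by (intro prop_complete[OF _ v1]) simp
    then have "gprov L (image_mset (Box n) {#Imp A B, A#} + image_mset boxp {#}, {#Box n B#})"
      using w by (intro boxR_any) (simp_all add: wf_seq_def)
    then have "gprov L (mset [Box n (Imp A B), Box n A], mset [Box n B])" by simp
    then have g: "gprov L ({#}, {#Imp (conjs [Box n (Imp A B), Box n A]) (disjs [Box n B])#})" by (rule seq_fm)
    have v2: "valid (add_mset (Imp (conjs [Box n (Imp A B), Box n A]) (disjs [Box n B])) {#}) {#F#}"
      unfolding F by (simp add: valid_def)
    show ?thesis using wF by (intro sem_cut[OF g _ v2]) simp
  qed
  have F4: "gprov L ({#}, {#F#})" if hh: "ax_4 F"
  proof -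
    obtain n A where F: "F = Imp (Box n A) (Box (Suc n) (Box n A))" using hh by (auto simp: ax_4_def)
    have wA: "wff A" "\<forall>m\<in>boxes A. m < n" using wF F by auto
    have "gprov L ({#} + image_mset boxp {#(n,A)#}, {#Box n A#})"
      using wA by (intro prop_complete) (auto simp: boxp_def valid_def)
    then have "gprov L (image_mset (Box (Suc n)) {#} + image_mset boxp {#(n,A)#}, {#Box (Suc n) (Box n A)#})"
      using wF F by (intro boxR_any) (auto simp: wf_seq_def boxp_def)
    then have "gprov L ({#Box n A#}, {#Box (Suc n) (Box n A)#})" by (simp add: boxp_def)
    then show ?thesis using F gprov.impR[of L "Box n A" "{#}" "Box (Suc n) (Box n A)" "{#}"] by simp
  qed
  have D: "gprov L ({#}, {#F#})" if hh: "ax_D F" "L = KD4h"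
  proof -
    obtain n where F: "F = Neg (Box n Bot)" using hh by (auto simp: ax_D_def)
    have "gprov L ({#Bot#} + image_mset snd {#} + image_mset boxp {#}, {#})"
      using gprov.botL by simp
    then have "gprov L (image_mset (Box n) {#Bot#} + image_mset boxp {#}, {#})"
      by (intro gprov.boxDR[OF hh(2)]) (auto simp: wf_seq_def)
    then have "gprov L ({#Box n Bot#}, {#})" by simp
    then show ?thesis using F gprov.negR[of L "Box n Bot" "{#}" "{#}"] by simp
  qed
  have T: "gprov L ({#}, {#F#})" if hh: "ax_T F" "L = S4h"
  proof -
    obtain n A where F: "F = Imp (Box n A) A" using hh by (auto simp: ax_T_def)
    have "gprov L ({#A#}, {#A#})" using wF F by (intro gprov.id) simp
    then have "gprov L ({#Box n A#}, {#A#})" using gprov.boxL[OF hh(2), of A "{#}" "{#A#}" n] wF F by simp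
    then show ?thesis using F gprov.impR[of L "Box n A" "{#}" A "{#}"] by simp
  qed
  show ?thesis using ax H K F4 D T by (cases L) auto
qed


lemma hil_complete: "hil L A \<Longrightarrow> gprov L ({#}, {#A#})"
proof (induction rule: hil.induct)
  case (taut A)
  have v: "valid {#} {#A#}" using taut(2) by (simp add: valid_def taut_def)
  show ?case using taut(1) by (intro prop_complete[OF _ v]) simp
next
  case (ax A)
  then show ?case by (rule ax_complete)
next
  case (mp A B)
  have wB: "wff B" using hil_wff[OF mp.hyps(1)] by simp
  have wA: "wff A" using hil_wff[OF mp.hyps(2)] by simp
  have v: "valid (add_mset (Imp A B) {#A#}) {#B#}" by (simp add: valid_def)
  have ab: "gprov L ({#A#}, {#B#})" using wA wB by (intro sem_cut[OF mp.IH(1) _ v]) simp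
  have "gprov L ({#} + {#}, {#} + {#B#})" by (rule gprov.cut[OF mp.IH(2) ab])
  then show ?case by simp
next
  case (nec A n)
  have "wff A" using hil_wff[OF nec.hyps(1)] .
  then have "gprov L (image_mset (Box n) {#} + image_mset boxp {#}, {#Box n A#})"
    using nec by (intro boxR_any) (auto simp: wf_seq_def)
  then show ?case by simp
qed

theorem theorem3p7:
  fixes L :: logic
  shows "(\<forall>gs ds. (\<forall>A\<in>set gs \<union> set ds. wff A) \<longrightarrow>
            (gprov L (mset gs, mset ds) \<longleftrightarrow> hil L (Imp (conjs gs) (disjs ds))))
       \<and> (\<forall>A. wff A \<longrightarrow> (hil L A \<longleftrightarrow> gprov L ({#}, {#A#})))"
proof (intro conjI allI impI iffI)
  fix gs ds assume "gprov L (mset gs, mset ds)"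
  then show "hil L (Imp (conjs gs) (disjs ds))" by (rule gprov_sound) auto
next
  fix gs ds assume w: "\<forall>A\<in>set gs \<union> set ds. wff A" and h: "hil L (Imp (conjs gs) (disjs ds))"
  show "gprov L (mset gs, mset ds)"
  proof (rule sem_cut[OF hil_complete[OF h]])
    show "\<forall>x\<in>#mset gs + mset ds. wff x" using w by simp
    show "valid (add_mset (Imp (conjs gs) (disjs ds)) (mset gs)) (mset ds)"
      unfolding valid_def by (simp add: peval_conjs peval_disjs)
  qed
next
  fix A assume "hil L A"
  then show "gprov L ({#}, {#A#})" by (rule hil_complete)
next
  fix A assume w: "wff A" and g: "gprov L ({#}, {#A#})"
  have "hil L (Imp (conjs []) (disjs [A]))" using g by (rule gprov_sound) auto
  then show "hil L A" using w by (intro hil_tc[of "[Imp (conjs []) (disjs [A])]"]) auto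
qed

end
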